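(* Let $\Sigma\subset\mathbb{R}^d$ be a connected open set, $M\subset\mathbb{R}^D$ open, $V$ a smooth volume metric on $M$, and $X:\Sigma\to M$ smooth with $\gamma_v>0$ on $\Sigma$. Then $X$ satisfies the Euler–Lagrange equations of the Schild action $S_S=\int_\Sigma d^d\xi\,\gamma_v$ if and only if $\gamma_v$ is constant on $\Sigma$ and $X$ satisfies the Euler–Lagrange equations of the Nambu–Goto action $S_{NG}=\int_\Sigma d^d\xi\,\sqrt{\gamma_v}$.
   Context: A volume metric (of degree $d$) on $M$ is a smooth field of components $V_{[\mu_1\cdots\mu_d][\nu_1\cdots\nu_d]}(X)$ that is totally antisymmetric within each of the two $d$-tuples of indices and symmetric under exchange of the two $d$-tuples. Define $\sigma^{\mu_1\cdots\mu_d}=\epsilon^{a_1\cdots a_d}\partial_{a_1}X^{\mu_1}\cdots\partial_{a_d}X^{\mu_d}$ ($\epsilon$ the Levi-Civita symbol) and $\gamma_v=V_{[\mu_1\cdots\mu_d][\nu_1\cdots\nu_d]}(X)\,\sigma^{\mu_1\cdots\mu_d}\sigma^{\nu_1\cdots\nu_d}$. For a Riemannian (pseudo-Riemannian, with absolute determinant) metric $g$, taking $V=\frac1{d!}g_{\mu_1\nu_1}\cdots g_{\mu_d\nu_d}$ gives $\gamma_v=\det(g_{\mu\nu}(X)\partial_aX^\mu\partial_bX^\nu)$; for $d=2$ and an areal metric $G$ (components with $G_{\mu\nu\rho\lambda}=-G_{\nu\mu\rho\lambda}=-G_{\mu\nu\lambda\rho}=G_{\rho\lambda\mu\nu}$),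 $V=\frac14 G$. The Euler–Lagrange equations of $\int d^d\xi\,L$ are $\partial L/\partial X^\alpha-\partial_a\big(\partial L/\partial(\partial_aX^\alpha)\big)=0$. *)

theory Defs
  imports "HOL-Analysis.Analysis"
begin

definition pd :: "'n::finite \<Rightarrow> (real^'n \<Rightarrow> real) \<Rightarrow> real^'n \<Rightarrow> real" where
  "pd a f \<xi> = deriv (\<lambda>t. f (\<xi> + t *\<^sub>R axis a 1)) 0"

fun ipd :: "'n::finite list \<Rightarrow> (real^'n \<Rightarrow> real) \<Rightarrow> real^'n \<Rightarrow> real" where
  "ipd [] f = f"
| "ipd (a # as) f = pd a (ipd as f)"

definition smooth_fun_on :: "(real^'n::finite) set \<Rightarrow> (real^'n \<Rightarrow> real) \<Rightarrow> bool" where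
  "smooth_fun_on S f \<longleftrightarrow>
     (\<forall>as. continuous_on S (ipd as f) \<and>
        (\<forall>a. \<forall>\<xi>\<in>S. (\<lambda>t. ipd as f (\<xi> + t *\<^sub>R axis a 1)) differentiable (at 0)))"

definition smooth_map_on :: "(real^'n::finite) set \<Rightarrow> (real^'n \<Rightarrow> real^'m::finite) \<Rightarrow> bool" where
  "smooth_map_on S X \<longleftrightarrow> (\<forall>\<mu>. smooth_fun_on S (\<lambda>\<xi>. X \<xi> $ \<mu>))"

text \<open>Volume metric of degree d = CARD('d) on M: components V x \<mu> \<nu> indexed by
  d-tuples \<mu>, \<nu> :: 'd \<Rightarrow> 'D of target indices.\<close>
definition volume_metric ::
  "(real^'D::finite) set \<Rightarrow> (real^'D \<Rightarrow> ('d::finite \<Rightarrow> 'D) \<Rightarrow> ('d \<Rightarrow> 'D) \<Rightarrow> real) \<Rightarrow> bool" where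
  "volume_metric M V \<longleftrightarrow>
     (\<forall>\<mu> \<nu>. smooth_fun_on M (\<lambda>x. V x \<mu> \<nu>)) \<and>
     (\<forall>x\<in>M. \<forall>\<mu> \<nu>. V x \<mu> \<nu> = V x \<nu> \<mu> \<and>
        (\<forall>p. p permutes (UNIV :: 'd set) \<longrightarrow> V x (\<mu> \<circ> p) \<nu> = of_int (sign p) * V x \<mu> \<nu>))"

text \<open>sigma^{\<mu>_1...\<mu>_d} = \<epsilon>^{a_1...a_d} P_{a_1}^{\<mu>_1} ... P_{a_d}^{\<mu>_d},
  where P a \<mu> stands for \<partial>_a X^\<mu>. The Levi-Civita symbol is the sign of a permutation
  (and zero on non-bijective index tuples, which are therefore omitted).\<close>
definition sigma :: "('d::finite \<Rightarrow> 'D::finite \<Rightarrow> real) \<Rightarrow> ('d \<Rightarrow> 'D) \<Rightarrow> real" where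
  "sigma P \<mu> = (\<Sum>p\<in>{p. p permutes (UNIV :: 'd set)}. of_int (sign p) * (\<Prod>i\<in>UNIV. P (p i) (\<mu> i)))"

text \<open>gamma_v as a function of the field value x and its first derivatives P.\<close>
definition gammaL ::
  "(real^'D::finite \<Rightarrow> ('d::finite \<Rightarrow> 'D) \<Rightarrow> ('d \<Rightarrow> 'D) \<Rightarrow> real) \<Rightarrow> real^'D \<Rightarrow> ('d \<Rightarrow> 'D \<Rightarrow> real) \<Rightarrow> real" where
  "gammaL V x P = (\<Sum>\<mu>\<in>UNIV. \<Sum>\<nu>\<in>UNIV. V x \<mu> \<nu> * sigma P \<mu> * sigma P \<nu>)"

definition DX :: "(real^'d::finite \<Rightarrow> real^'D::finite) \<Rightarrow> real^'d \<Rightarrow> 'd \<Rightarrow> 'D \<Rightarrow> real" where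
  "DX X \<xi> a \<mu> = pd a (\<lambda>\<eta>. X \<eta> $ \<mu>) \<xi>"

definition gamma_v ::
  "(real^'D::finite \<Rightarrow> ('d::finite \<Rightarrow> 'D) \<Rightarrow> ('d \<Rightarrow> 'D) \<Rightarrow> real) \<Rightarrow> (real^'d \<Rightarrow> real^'D) \<Rightarrow> real^'d \<Rightarrow> real" where
  "gamma_v V X \<xi> = gammaL V (X \<xi>) (DX X \<xi>)"

definition dL_dX :: "(real^'D::finite \<Rightarrow> ('d::finite \<Rightarrow> 'D \<Rightarrow> real) \<Rightarrow> real) \<Rightarrow> 'D \<Rightarrow> real^'D \<Rightarrow> ('d \<Rightarrow> 'D \<Rightarrow> real) \<Rightarrow> real" where
  "dL_dX L \<alpha> x P = deriv (\<lambda>t. L (x + t *\<^sub>R axis \<alpha> 1) P) 0"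

definition dL_dP :: "(real^'D::finite \<Rightarrow> ('d::finite \<Rightarrow> 'D \<Rightarrow> real) \<Rightarrow> real) \<Rightarrow> 'd \<Rightarrow> 'D \<Rightarrow> real^'D \<Rightarrow> ('d \<Rightarrow> 'D \<Rightarrow> real) \<Rightarrow> real" where
  "dL_dP L a \<alpha> x P = deriv (\<lambda>t. L x (P(a := (P a)(\<alpha> := P a \<alpha> + t)))) 0"

definition euler_lagrange ::
  "(real^'d::finite) set \<Rightarrow> (real^'D::finite \<Rightarrow> ('d \<Rightarrow> 'D \<Rightarrow> real) \<Rightarrow> real) \<Rightarrow> (real^'d \<Rightarrow> real^'D) \<Rightarrow> bool" where
  "euler_lagrange S L X \<longleftrightarrow>
     (\<forall>\<alpha>. \<forall>\<xi>\<in>S. dL_dX L \<alpha> (X \<xi>) (DX X \<xi>)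
                 - (\<Sum>a\<in>UNIV. pd a (\<lambda>\<eta>. dL_dP L a \<alpha> (X \<eta>) (DX X \<eta>)) \<xi>) = 0)"

definition schildL where "schildL V = (\<lambda>x P. gammaL V x P)"
definition nambuGotoL where "nambuGotoL V = (\<lambda>x P. sqrt (gammaL V x P))"

end

theory Submission
  imports Defs
begin


lemma line_at:
  fixes v :: "'a::real_vector"
  assumes "((\<lambda>t. f ((\<xi> + s *\<^sub>R v) + t *\<^sub>R v)) has_real_derivative D) (at 0)"
  shows "((\<lambda>t. f (\<xi> + t *\<^sub>R v)) has_real_derivative D) (at s)"
proof -
  have e: "(\<lambda>t. f (\<xi> + (t + s) *\<^sub>R v)) = (\<lambda>t. f ((\<xi> + s *\<^sub>R v) + t *\<^sub>R v))"
    by (rule ext) (simp add: scaleR_add_left ac_simps)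
  have "((\<lambda>t. f (\<xi> + (t + s) *\<^sub>R v)) has_real_derivative D) (at 0)"
    using assms by (subst e)
  then show ?thesis using DERIV_shift[of "\<lambda>t. f (\<xi> + t *\<^sub>R v)" D 0 s] by simp
qed

lemma pd_DERIV:
  assumes "(\<lambda>t. f (\<xi> + t *\<^sub>R axis a 1)) differentiable (at 0)"
  shows "((\<lambda>t. f (\<xi> + t *\<^sub>R axis a 1)) has_real_derivative pd a f \<xi>) (at 0)"
  using assms unfolding pd_def by (simp add: DERIV_deriv_iff_real_differentiable)

lemma pd_eqI: "((\<lambda>t. f (\<xi> + t *\<^sub>R axis a 1)) has_real_derivative D) (at 0) \<Longrightarrow> pd a f \<xi> = D"
  unfolding pd_def by (rule DERIV_imp_deriv)

lemma MVT_sym: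
  fixes \<phi> :: "real \<Rightarrow> real"
  assumes "\<And>s. \<bar>s\<bar> \<le> \<bar>u\<bar> \<Longrightarrow> (\<phi> has_real_derivative \<phi>' s) (at s)"
  shows "\<exists>z. \<bar>z\<bar> \<le> \<bar>u\<bar> \<and> \<phi> u - \<phi> 0 = u * \<phi>' z"
proof (cases "u > 0")
  case True
  then obtain z where "0 < z" "z < u" "\<phi> u - \<phi> 0 = (u - 0) * \<phi>' z"
    using MVT2[of 0 u \<phi> \<phi>'] assms by fastforce
  then show ?thesis by (intro exI[of _ z]) auto
next
  case False
  show ?thesis
  proof (cases "u = 0")
    case True then show ?thesis by auto
  next
    case F: False
    with False have "u < 0" by simp
    then obtain z where "u < z" "z < 0" "\<phi> 0 - \<phi> u = (0 - u) * \<phi>' z"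
      using MVT2[of u 0 \<phi> \<phi>'] assms by fastforce
    then show ?thesis by (intro exI[of _ z]) (auto simp: algebra_simps)
  qed
qed

lemma bl_test: "bounded_linear (\<lambda>h::real^'n::finite. \<Sum>a\<in>UNIV. h$a * c a)"
  by (auto intro!: bounded_linear_intros)



lemma CP:
  fixes f :: "real^'n::finite \<Rightarrow> real"
  assumes S: "open S" and x: "x \<in> S"
    and dif: "\<And>a y. y \<in> S \<Longrightarrow> (\<lambda>t. f (y + t *\<^sub>R axis a 1)) differentiable (at 0)"
    and cont: "\<And>a. continuous_on S (pd a f)"
  shows "(f has_derivative (\<lambda>h. \<Sum>a\<in>UNIV. h$a * pd a f x)) (at x)"
proof -
  obtain r where r: "r > 0" "ball x r \<subseteq> S" using S x open_contains_ball by blast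
  have key: "\<exists>d>0. \<forall>h. norm h < d \<longrightarrow>
      \<bar>f (x + h) - f x - (\<Sum>a\<in>UNIV. h$a * pd a f x)\<bar> \<le> e * norm h" if e: "e > 0" for e
  proof -
    define e' where "e' = e / real CARD('n)"
    have e': "e' > 0" using e by (simp add: e'_def)
    have "\<forall>a. \<exists>d>0. \<forall>y. dist y x < d \<longrightarrow> dist (pd a f y) (pd a f x) < e'"
    proof
      fix a
      have "continuous (at x) (pd a f)"
        using cont[of a] S x continuous_on_eq_continuous_at by blast
      then show "\<exists>d>0. \<forall>y. dist y x < d \<longrightarrow> dist (pd a f y) (pd a f x) < e'"
        using e' unfolding continuous_at_eps_delta by blast
    qed
    then obtain d where d: "\<And>a. d a > 0" "\<And>a y. dist y x < d a \<Longrightarrow> dist (pd a f y) (pd a f x) < e'"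
      by metis
    define \<delta> where "\<delta> = min r (Min (range d))"
    have \<delta>: "\<delta> > 0" using d r by (simp add: \<delta>_def)
    have \<delta>d: "\<delta> \<le> d a" for a unfolding \<delta>_def by (rule min.coboundedI2, rule Min_le) auto
    have "\<forall>h. norm h < \<delta> \<longrightarrow>
      \<bar>f (x + h) - f x - (\<Sum>a\<in>UNIV. h$a * pd a f x)\<bar> \<le> e * norm h"
    proof (intro allI impI)
      fix h :: "real^'n"
      assume h: "norm h < \<delta>"
      define hI where "hI I = (\<chi> i. if i \<in> I then h$i else 0)" for I
      have ind: "\<bar>f (x + hI I) - f x - (\<Sum>a\<in>I. h$a * pd a f x)\<bar> \<le> real (card I) * e' * norm h"
        if "finite I" for I
        using that
      proof (induction I rule: finite_induct)
        case empty
        have "hI {} = 0" by (simp add: hI_def vec_eq_iff)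
        then show ?case by simp
      next
        case (insert j I)
        have hIj: "hI (insert j I) = hI I + h$j *\<^sub>R axis j 1"
          using insert.hyps by (auto simp: hI_def vec_eq_iff axis_def)
        define y where "y s = x + hI I + s *\<^sub>R axis j 1" for s
        have ny: "norm (y s - x) \<le> norm h" if "\<bar>s\<bar> \<le> \<bar>h$j\<bar>" for s
        proof -
          have "norm (hI I + s *\<^sub>R axis j 1) \<le> norm h"
            by (rule norm_le_componentwise_cart)
              (use that insert.hyps in \<open>auto simp: hI_def axis_def\<close>)
          then show ?thesis by (simp add: y_def)
        qed
        have yS: "y s \<in> S" if "\<bar>s\<bar> \<le> \<bar>h$j\<bar>" for s
        proof -
          have "dist x (y s) < r" using ny[OF that] h \<delta>_def by (simp add: dist_norm norm_minus_commute)
          then show ?thesis using r by auto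
        qed
        have der: "((\<lambda>s. f (x + hI I + s *\<^sub>R axis j 1)) has_real_derivative pd j f (y s)) (at s)"
          if "\<bar>s\<bar> \<le> \<bar>h$j\<bar>" for s
          by (rule line_at, unfold y_def[symmetric], rule pd_DERIV, rule dif, rule yS[OF that])
        obtain z where z: "\<bar>z\<bar> \<le> \<bar>h$j\<bar>"
          "f (x + hI I + h$j *\<^sub>R axis j 1) - f (x + hI I + 0 *\<^sub>R axis j 1) = h$j * pd j f (y z)"
          using MVT_sym[of "h$j" "\<lambda>s. f (x + hI I + s *\<^sub>R axis j 1)" "\<lambda>s. pd j f (y s)", OF der] by blast
        have "dist (y z) x < d j" using ny[OF z(1)] h \<delta>d[of j] by (simp add: dist_norm)
        then have pz: "\<bar>pd j f (y z) - pd j f x\<bar> < e'" using d(2) by (simp add: dist_real_def)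
        have hj: "\<bar>h$j\<bar> \<le> norm h" by (rule component_le_norm_cart)
        have A: "\<bar>f (x + hI (insert j I)) - f (x + hI I) - h$j * pd j f x\<bar> \<le> e' * norm h"
        proof -
          have "f (x + hI (insert j I)) - f (x + hI I) - h$j * pd j f x = h$j * (pd j f (y z) - pd j f x)"
            using z(2) by (simp add: hIj add.assoc algebra_simps)
          also have "\<bar>\<dots>\<bar> \<le> norm h * e'"
            unfolding abs_mult using pz hj by (intro mult_mono) auto
          finally show ?thesis by (simp add: mult.commute)
        qed
        have "\<bar>f (x + hI (insert j I)) - f x - (\<Sum>a\<in>insert j I. h$a * pd a f x)\<bar>
           = \<bar>(f (x + hI (insert j I)) - f (x + hI I) - h$j * pd j f x)
              + (f (x + hI I) - f x - (\<Sum>a\<in>I. h$a * pd a f x))\<bar>"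
          using insert.hyps by simp
        also have "\<dots> \<le> e' * norm h + real (card I) * e' * norm h"
          using A insert.IH by linarith
        also have "\<dots> = real (card (insert j I)) * e' * norm h"
          using insert.hyps by (simp add: algebra_simps)
        finally show ?case .
      qed
      have "hI UNIV = h" by (simp add: hI_def vec_eq_iff)
      with ind[of UNIV] show "\<bar>f (x + h) - f x - (\<Sum>a\<in>UNIV. h$a * pd a f x)\<bar> \<le> e * norm h"
        by (simp add: e'_def)
    qed
    then show ?thesis using \<delta> by blast
  qed
  show ?thesis
    unfolding has_derivative_at_alt
  proof (intro conjI allI impI)
    show "bounded_linear (\<lambda>h. \<Sum>a\<in>UNIV. h$a * pd a f x)"
      by (auto intro!: bounded_linear_intros)
    fix e :: real assume "e > 0"
    from key[OF this] obtain d where "d > 0" and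
      d: "\<And>h. norm h < d \<Longrightarrow> \<bar>f (x + h) - f x - (\<Sum>a\<in>UNIV. h$a * pd a f x)\<bar> \<le> e * norm h" by blast
    show "\<exists>d>0. \<forall>y. norm (y - x) < d \<longrightarrow>
       norm (f y - f x - (\<Sum>a\<in>UNIV. (y - x)$a * pd a f x)) \<le> e * norm (y - x)"
      using \<open>d > 0\<close> d[of "_ - x"] by auto
  qed
qed



lemma norm_two_axes:
  assumes "\<bar>s\<bar> \<le> h" "\<bar>t\<bar> \<le> h"
  shows "norm (s *\<^sub>R axis a (1::real) + t *\<^sub>R axis b 1 :: real^'n::finite) \<le> 2 * h"
proof -
  have "norm (s *\<^sub>R axis a (1::real) + t *\<^sub>R axis b 1 :: real^'n) \<le> norm (s *\<^sub>R axis a (1::real) :: real^'n) + norm (t *\<^sub>R axis b (1::real) :: real^'n)"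
    by (rule norm_triangle_ineq)
  also have "\<dots> = \<bar>s\<bar> + \<bar>t\<bar>" by (simp add: norm_axis_1)
  finally show ?thesis using assms by simp
qed

lemma mixed_mvt:
  fixes f :: "real^'n::finite \<Rightarrow> real"
  assumes r: "ball \<xi> r \<subseteq> S" and h: "0 < h" "2*h < r"
    and dA: "\<And>y. y\<in>S \<Longrightarrow> (\<lambda>t. f (y + t *\<^sub>R axis a 1)) differentiable (at 0)"
    and dAB: "\<And>y. y\<in>S \<Longrightarrow> (\<lambda>t. pd a f (y + t *\<^sub>R axis b 1)) differentiable (at 0)"
  shows "\<exists>s t. \<bar>s\<bar> \<le> h \<and> \<bar>t\<bar> \<le> h \<and>
     f (\<xi> + h *\<^sub>R axis a 1 + h *\<^sub>R axis b 1) - f (\<xi> + h *\<^sub>R axis a 1) - f (\<xi> + h *\<^sub>R axis b 1) + f \<xi>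
       = h * h * pd b (pd a f) (\<xi> + s *\<^sub>R axis a 1 + t *\<^sub>R axis b 1)"
proof -
  have inS: "\<xi> + s *\<^sub>R axis a 1 + t *\<^sub>R axis b 1 \<in> S" if "\<bar>s\<bar> \<le> h" "\<bar>t\<bar> \<le> h" for s t
  proof -
    have "norm (s *\<^sub>R axis a (1::real) + t *\<^sub>R axis b 1 :: real^'n) \<le> 2 * h"
      using norm_two_axes that by blast
    then have "dist (\<xi> + s *\<^sub>R axis a 1 + t *\<^sub>R axis b 1) \<xi> < r"
      using h by (simp add: dist_norm add.assoc)
    then have "\<xi> + s *\<^sub>R axis a 1 + t *\<^sub>R axis b 1 \<in> ball \<xi> r" by (simp only: mem_ball dist_commute[of \<xi>])
    then show ?thesis using r by auto
  qed
  define \<phi> where "\<phi> s = f ((\<xi> + h *\<^sub>R axis b 1) + s *\<^sub>R axis a 1) - f (\<xi> + s *\<^sub>R axis a 1)" for s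
  have der\<phi>: "(\<phi> has_real_derivative
      (pd a f ((\<xi> + h *\<^sub>R axis b 1) + s *\<^sub>R axis a 1) - pd a f (\<xi> + s *\<^sub>R axis a 1))) (at s)"
    if "\<bar>s\<bar> \<le> \<bar>h\<bar>" for s
    unfolding \<phi>_def
  proof (rule DERIV_diff; rule line_at, rule pd_DERIV, rule dA)
    show "\<xi> + h *\<^sub>R axis b 1 + s *\<^sub>R axis a 1 \<in> S"
      using inS[of s h] that h by (simp add: ac_simps)
    show "\<xi> + s *\<^sub>R axis a 1 \<in> S"
      using inS[of s 0] that h by simp
  qed
  obtain s1 where s1: "\<bar>s1\<bar> \<le> h" "\<phi> h - \<phi> 0 = h * (pd a f ((\<xi> + h *\<^sub>R axis b 1) + s1 *\<^sub>R axis a 1) - pd a f (\<xi> + s1 *\<^sub>R axis a 1))"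
    using MVT_sym[of h \<phi>, OF der\<phi>] h by auto
  define \<psi> where "\<psi> t = pd a f ((\<xi> + s1 *\<^sub>R axis a 1) + t *\<^sub>R axis b 1)" for t
  have der\<psi>: "(\<psi> has_real_derivative pd b (pd a f) ((\<xi> + s1 *\<^sub>R axis a 1) + t *\<^sub>R axis b 1)) (at t)"
    if "\<bar>t\<bar> \<le> \<bar>h\<bar>" for t
    unfolding \<psi>_def
  proof (rule line_at, rule pd_DERIV, rule dAB)
    show "\<xi> + s1 *\<^sub>R axis a 1 + t *\<^sub>R axis b 1 \<in> S"
      using inS[of s1 t] that h s1 by simp
  qed
  obtain t1 where t1: "\<bar>t1\<bar> \<le> h" "\<psi> h - \<psi> 0 = h * pd b (pd a f) ((\<xi> + s1 *\<^sub>R axis a 1) + t1 *\<^sub>R axis b 1)"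
    using MVT_sym[of h \<psi>, OF der\<psi>] h by auto
  have "f (\<xi> + h *\<^sub>R axis a 1 + h *\<^sub>R axis b 1) - f (\<xi> + h *\<^sub>R axis a 1) - f (\<xi> + h *\<^sub>R axis b 1) + f \<xi>
      = \<phi> h - \<phi> 0" by (simp add: \<phi>_def ac_simps)
  also have "\<dots> = h * (\<psi> h - \<psi> 0)" using s1(2) by (simp add: \<psi>_def ac_simps)
  also have "\<dots> = h * h * pd b (pd a f) (\<xi> + s1 *\<^sub>R axis a 1 + t1 *\<^sub>R axis b 1)"
    using t1(2) by simp
  finally show ?thesis using s1(1) t1(1) by blast
qed

lemma SW:
  fixes f :: "real^'n::finite \<Rightarrow> real"
  assumes S: "open S" and \<xi>: "\<xi> \<in> S"
    and dA: "\<And>y. y\<in>S \<Longrightarrow> (\<lambda>t. f (y + t *\<^sub>R axis a 1)) differentiable (at 0)"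
    and dB: "\<And>y. y\<in>S \<Longrightarrow> (\<lambda>t. f (y + t *\<^sub>R axis b 1)) differentiable (at 0)"
    and dAB: "\<And>y. y\<in>S \<Longrightarrow> (\<lambda>t. pd a f (y + t *\<^sub>R axis b 1)) differentiable (at 0)"
    and dBA: "\<And>y. y\<in>S \<Longrightarrow> (\<lambda>t. pd b f (y + t *\<^sub>R axis a 1)) differentiable (at 0)"
    and cAB: "continuous_on S (pd b (pd a f))"
    and cBA: "continuous_on S (pd a (pd b f))"
  shows "pd b (pd a f) \<xi> = pd a (pd b f) \<xi>"
proof (rule ccontr)
  assume ne: "pd b (pd a f) \<xi> \<noteq> pd a (pd b f) \<xi>"
  define e where "e = \<bar>pd b (pd a f) \<xi> - pd a (pd b f) \<xi>\<bar> / 3"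
  have e: "e > 0" using ne by (simp add: e_def)
  obtain r where r: "r > 0" "ball \<xi> r \<subseteq> S" using S \<xi> open_contains_ball by blast
  have "continuous (at \<xi>) (pd b (pd a f))"
    using cAB S \<xi> continuous_on_eq_continuous_at by blast
  then obtain d1 where d1: "d1 > 0" "\<And>y. dist y \<xi> < d1 \<Longrightarrow> dist (pd b (pd a f) y) (pd b (pd a f) \<xi>) < e"
    using e unfolding continuous_at_eps_delta by blast
  have "continuous (at \<xi>) (pd a (pd b f))"
    using cBA S \<xi> continuous_on_eq_continuous_at by blast
  then obtain d2 where d2: "d2 > 0" "\<And>y. dist y \<xi> < d2 \<Longrightarrow> dist (pd a (pd b f) y) (pd a (pd b f) \<xi>) < e"
    using e unfolding continuous_at_eps_delta by blast
  define h where "h = min r (min d1 d2) / 3"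
  have h: "0 < h" "2 * h < r" "2 * h < d1" "2 * h < d2" using r d1 d2 by (auto simp: h_def)
  obtain s t where st: "\<bar>s\<bar> \<le> h" "\<bar>t\<bar> \<le> h"
     "f (\<xi> + h *\<^sub>R axis a 1 + h *\<^sub>R axis b 1) - f (\<xi> + h *\<^sub>R axis a 1) - f (\<xi> + h *\<^sub>R axis b 1) + f \<xi>
       = h * h * pd b (pd a f) (\<xi> + s *\<^sub>R axis a 1 + t *\<^sub>R axis b 1)"
    using mixed_mvt[OF r(2) h(1,2) dA dAB] by blast
  obtain s' t' where st': "\<bar>s'\<bar> \<le> h" "\<bar>t'\<bar> \<le> h"
     "f (\<xi> + h *\<^sub>R axis b 1 + h *\<^sub>R axis a 1) - f (\<xi> + h *\<^sub>R axis b 1) - f (\<xi> + h *\<^sub>R axis a 1) + f \<xi>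
       = h * h * pd a (pd b f) (\<xi> + s' *\<^sub>R axis b 1 + t' *\<^sub>R axis a 1)"
    using mixed_mvt[OF r(2) h(1,2) dB dBA] by blast
  have "h * h * pd b (pd a f) (\<xi> + s *\<^sub>R axis a 1 + t *\<^sub>R axis b 1)
      = h * h * pd a (pd b f) (\<xi> + s' *\<^sub>R axis b 1 + t' *\<^sub>R axis a 1)"
  proof -
    have "f (\<xi> + h *\<^sub>R axis a 1 + h *\<^sub>R axis b 1) = f (\<xi> + h *\<^sub>R axis b 1 + h *\<^sub>R axis a 1)"
      by (simp only: add.assoc add.commute[of "h *\<^sub>R axis a 1" "h *\<^sub>R axis b 1"])
    then show ?thesis using st(3) st'(3) by linarith
  qed
  then have eq: "pd b (pd a f) (\<xi> + s *\<^sub>R axis a 1 + t *\<^sub>R axis b 1)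
      = pd a (pd b f) (\<xi> + s' *\<^sub>R axis b 1 + t' *\<^sub>R axis a 1)" using h(1) by simp
  have "dist (\<xi> + s *\<^sub>R axis a 1 + t *\<^sub>R axis b 1) \<xi> < d1"
    using norm_two_axes[OF st(1,2), of a b] h by (simp add: dist_norm add.assoc)
  then have 1: "\<bar>pd b (pd a f) (\<xi> + s *\<^sub>R axis a 1 + t *\<^sub>R axis b 1) - pd b (pd a f) \<xi>\<bar> < e"
    using d1(2) by (simp add: dist_real_def)
  have "dist (\<xi> + s' *\<^sub>R axis b 1 + t' *\<^sub>R axis a 1) \<xi> < d2"
    using norm_two_axes[OF st'(1,2), of b a] h by (simp add: dist_norm add.assoc)
  then have 2: "\<bar>pd a (pd b f) (\<xi> + s' *\<^sub>R axis b 1 + t' *\<^sub>R axis a 1) - pd a (pd b f) \<xi>\<bar> < e"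
    using d2(2) by (simp add: dist_real_def)
  from 1 2 eq have "\<bar>pd b (pd a f) \<xi> - pd a (pd b f) \<xi>\<bar> < 2 * e" by linarith
  then show False using e by (simp add: e_def)
qed



definition dl :: "'D \<Rightarrow> 'D \<Rightarrow> real" where "dl \<alpha> = (\<lambda>\<beta>. if \<beta> = \<alpha> then 1 else 0)"

lemma prod_upd:
  fixes P :: "'d::finite \<Rightarrow> 'D \<Rightarrow> real"
  assumes p: "p permutes (UNIV :: 'd set)"
  shows "(\<Prod>i\<in>UNIV. (P(a:=w)) (p i) (\<mu> i)) = w (\<mu> (inv p a)) * (\<Prod>i\<in>UNIV-{inv p a}. P (p i) (\<mu> i))"
proof -
  have "(\<Prod>i\<in>UNIV. (P(a:=w)) (p i) (\<mu> i)) = (P(a:=w)) (p (inv p a)) (\<mu> (inv p a)) * (\<Prod>i\<in>UNIV-{inv p a}. (P(a:=w)) (p i) (\<mu> i))"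
    by (rule prod.remove) auto
  also have "(\<Prod>i\<in>UNIV-{inv p a}. (P(a:=w)) (p i) (\<mu> i)) = (\<Prod>i\<in>UNIV-{inv p a}. P (p i) (\<mu> i))"
  proof (rule prod.cong)
    fix i assume "i \<in> UNIV - {inv p a}"
    then have "i \<noteq> inv p a" by simp
    then have "p i \<noteq> a" using permutes_inverses(2)[OF p, of i] by auto
    then show "(P(a:=w)) (p i) (\<mu> i) = P (p i) (\<mu> i)" by simp
  qed simp
  finally show ?thesis using permutes_inverses[OF p] by simp
qed

lemma sigma_upd_lin:
  fixes P :: "'d::finite \<Rightarrow> 'D::finite \<Rightarrow> real"
  shows "sigma (P(a := (\<lambda>\<beta>. u \<beta> + t * w \<beta>))) \<mu> = sigma (P(a:=u)) \<mu> + t * sigma (P(a:=w)) \<mu>"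
proof -
  have "of_int (sign p) * (\<Prod>i\<in>UNIV. (P(a := (\<lambda>\<beta>. u \<beta> + t * w \<beta>))) (p i) (\<mu> i))
     = of_int (sign p) * (\<Prod>i\<in>UNIV. (P(a := u)) (p i) (\<mu> i)) + t * (of_int (sign p) * (\<Prod>i\<in>UNIV. (P(a := w)) (p i) (\<mu> i)))"
    if "p \<in> {p. p permutes (UNIV :: 'd set)}" for p
    using that by (simp only: mem_Collect_eq prod_upd) (simp add: algebra_simps)
  then show ?thesis unfolding sigma_def sum_distrib_left sum.distrib[symmetric]
    by (rule sum.cong[OF refl])
qed

lemma sigma_upd_sum:
  fixes P :: "'d::finite \<Rightarrow> 'D::finite \<Rightarrow> real"
  shows "sigma (P(a := w)) \<mu> = (\<Sum>\<alpha>\<in>UNIV. w \<alpha> * sigma (P(a := dl \<alpha>)) \<mu>)"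
proof -
  have "(\<Sum>\<alpha>\<in>UNIV. w \<alpha> * sigma (P(a := dl \<alpha>)) \<mu>)
     = (\<Sum>\<alpha>\<in>UNIV. \<Sum>p\<in>{p. p permutes (UNIV :: 'd set)}. w \<alpha> * (of_int (sign p) * (dl \<alpha> (\<mu> (inv p a)) * (\<Prod>i\<in>UNIV-{inv p a}. P (p i) (\<mu> i)))))"
    unfolding sigma_def sum_distrib_left
  proof (intro sum.cong refl)
    fix \<alpha> p assume "p \<in> {p. p permutes (UNIV :: 'd set)}"
    then have p: "p permutes (UNIV :: 'd set)" by simp
    show "w \<alpha> * (of_int (sign p) * (\<Prod>i\<in>UNIV. (P(a := dl \<alpha>)) (p i) (\<mu> i)))
       = w \<alpha> * (of_int (sign p) * (dl \<alpha> (\<mu> (inv p a)) * (\<Prod>i\<in>UNIV-{inv p a}. P (p i) (\<mu> i))))"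
      by (simp only: prod_upd[OF p])
  qed
  also have "\<dots> = (\<Sum>p\<in>{p. p permutes (UNIV :: 'd set)}. \<Sum>\<alpha>\<in>UNIV. w \<alpha> * (of_int (sign p) * (dl \<alpha> (\<mu> (inv p a)) * (\<Prod>i\<in>UNIV-{inv p a}. P (p i) (\<mu> i)))))"
    by (rule sum.swap)
  also have "\<dots> = (\<Sum>p\<in>{p. p permutes (UNIV :: 'd set)}. of_int (sign p) * (w (\<mu> (inv p a)) * (\<Prod>i\<in>UNIV-{inv p a}. P (p i) (\<mu> i))))"
  proof (rule sum.cong)
    fix p
    have "(\<Sum>\<alpha>\<in>UNIV. w \<alpha> * (of_int (sign p) * (dl \<alpha> (\<mu> (inv p a)) * (\<Prod>i\<in>UNIV-{inv p a}. P (p i) (\<mu> i)))))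
       = (\<Sum>\<alpha>\<in>UNIV. (if \<alpha> = \<mu> (inv p a) then w \<alpha> * (of_int (sign p) * (\<Prod>i\<in>UNIV-{inv p a}. P (p i) (\<mu> i))) else 0))"
      by (rule sum.cong) (auto simp: dl_def)
    also have "\<dots> = of_int (sign p) * (w (\<mu> (inv p a)) * (\<Prod>i\<in>UNIV-{inv p a}. P (p i) (\<mu> i)))"
      by (simp add: sum.delta')
    finally show "(\<Sum>\<alpha>\<in>UNIV. w \<alpha> * (of_int (sign p) * (dl \<alpha> (\<mu> (inv p a)) * (\<Prod>i\<in>UNIV-{inv p a}. P (p i) (\<mu> i)))))
       = of_int (sign p) * (w (\<mu> (inv p a)) * (\<Prod>i\<in>UNIV-{inv p a}. P (p i) (\<mu> i)))" .
  qed simp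
  also have "\<dots> = sigma (P(a := w)) \<mu>"
    unfolding sigma_def
  proof (intro sum.cong refl)
    fix p assume "p \<in> {p. p permutes (UNIV :: 'd set)}"
    then have p: "p permutes (UNIV :: 'd set)" by simp
    show "of_int (sign p) * (w (\<mu> (inv p a)) * (\<Prod>i\<in>UNIV-{inv p a}. P (p i) (\<mu> i)))
       = of_int (sign p) * (\<Prod>i\<in>UNIV. (P(a := w)) (p i) (\<mu> i))"
      by (simp only: prod_upd[OF p])
  qed
  finally show ?thesis by simp
qed

lemma sigma_det:
  fixes Q :: "'d::finite \<Rightarrow> 'D::finite \<Rightarrow> real"
  shows "sigma Q \<mu> = det (\<chi> i k. Q k (\<mu> i))"
  unfolding sigma_def det_def by simp

lemma sigma_alt:
  fixes P :: "'d::finite \<Rightarrow> 'D::finite \<Rightarrow> real"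
  assumes "a \<noteq> b"
  shows "sigma (P(a := P b)) \<mu> = 0"
  unfolding sigma_det
  by (rule det_identical_columns[OF assms]) (simp add: column_def vec_eq_iff)

lemma sigma_DERIV:
  fixes Q :: "real \<Rightarrow> 'd::finite \<Rightarrow> 'D::finite \<Rightarrow> real"
  assumes "\<And>a \<alpha>. ((\<lambda>t. Q t a \<alpha>) has_real_derivative Q' a \<alpha>) (at t0)"
  shows "((\<lambda>t. sigma (Q t) \<mu>) has_real_derivative (\<Sum>a\<in>UNIV. sigma ((Q t0)(a := Q' a)) \<mu>)) (at t0)"
proof -
  have "((\<lambda>t. sigma (Q t) \<mu>) has_real_derivative
     (\<Sum>p\<in>{p. p permutes (UNIV :: 'd set)}. of_int (sign p) *
        (\<Sum>i\<in>UNIV. Q' (p i) (\<mu> i) * (\<Prod>j\<in>UNIV-{i}. Q t0 (p j) (\<mu> j))))) (at t0)"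
    unfolding sigma_def
    by (intro DERIV_sum DERIV_cmult has_field_derivative_prod assms)
  also have "(\<Sum>p\<in>{p. p permutes (UNIV :: 'd set)}. of_int (sign p) *
        (\<Sum>i\<in>UNIV. Q' (p i) (\<mu> i) * (\<Prod>j\<in>UNIV-{i}. Q t0 (p j) (\<mu> j))))
     = (\<Sum>a\<in>UNIV. sigma ((Q t0)(a := Q' a)) \<mu>)"
  proof -
    have "(\<Sum>p\<in>{p. p permutes (UNIV :: 'd set)}. of_int (sign p) *
        (\<Sum>i\<in>UNIV. Q' (p i) (\<mu> i) * (\<Prod>j\<in>UNIV-{i}. Q t0 (p j) (\<mu> j))))
      = (\<Sum>p\<in>{p. p permutes (UNIV :: 'd set)}. of_int (sign p) *
        (\<Sum>a\<in>UNIV. (\<Prod>i\<in>UNIV. ((Q t0)(a := Q' a)) (p i) (\<mu> i))))"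
    proof (rule sum.cong)
      fix p assume "p \<in> {p. p permutes (UNIV :: 'd set)}"
      then have p: "p permutes (UNIV :: 'd set)" by simp
      have "(\<Sum>a\<in>UNIV. (\<Prod>i\<in>UNIV. ((Q t0)(a := Q' a)) (p i) (\<mu> i)))
          = (\<Sum>a\<in>UNIV. Q' a (\<mu> (inv p a)) * (\<Prod>i\<in>UNIV-{inv p a}. Q t0 (p i) (\<mu> i)))"
        by (simp only: prod_upd[OF p])
      also have "\<dots> = (\<Sum>i\<in>UNIV. Q' (p i) (\<mu> (inv p (p i))) * (\<Prod>j\<in>UNIV-{inv p (p i)}. Q t0 (p j) (\<mu> j)))"
        by (rule sum.reindex_bij_betw[symmetric]) (rule permutes_imp_bij[OF p])
      also have "\<dots> = (\<Sum>i\<in>UNIV. Q' (p i) (\<mu> i) * (\<Prod>j\<in>UNIV-{i}. Q t0 (p j) (\<mu> j)))"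
        by (simp add: permutes_inverses[OF p])
      finally show "of_int (sign p) * (\<Sum>i\<in>UNIV. Q' (p i) (\<mu> i) * (\<Prod>j\<in>UNIV-{i}. Q t0 (p j) (\<mu> j)))
         = of_int (sign p) * (\<Sum>a\<in>UNIV. (\<Prod>i\<in>UNIV. ((Q t0)(a := Q' a)) (p i) (\<mu> i)))" by simp
    qed simp
    also have "\<dots> = (\<Sum>a\<in>UNIV. sigma ((Q t0)(a := Q' a)) \<mu>)"
      unfolding sigma_def by (simp add: sum_distrib_left sum.swap[of _ UNIV])
    finally show ?thesis .
  qed
  finally show ?thesis .
qed



lemma vec_path:
  fixes c :: "real \<Rightarrow> real^'n::finite"
  assumes "\<And>k. ((\<lambda>t. c t $ k) has_real_derivative c' $ k) (at t0)"
  shows "(c has_derivative (\<lambda>t. t *\<^sub>R c')) (at t0)"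
proof -
  have "((\<lambda>x. c x \<bullet> i) has_derivative (\<lambda>x. (x *\<^sub>R c') \<bullet> i)) (at t0)" if "i \<in> Basis" for i
  proof -
    from that obtain k where i: "i = axis k 1" by (auto simp: Basis_vec_def)
    have "((\<lambda>t. c t $ k) has_derivative (*) (c' $ k)) (at t0)"
      using assms[of k] by (simp add: has_field_derivative_def)
    moreover have "(\<lambda>x. x * c' $ k) = (*) (c' $ k)" by (rule ext) (simp add: mult.commute)
    ultimately show ?thesis unfolding i inner_axis by simp
  qed
  then show ?thesis by (subst has_derivative_componentwise_within) blast
qed

lemma smooth_pd_diff:
  assumes "smooth_fun_on S f" "y \<in> S"
  shows "(\<lambda>t. ipd as f (y + t *\<^sub>R axis a 1)) differentiable (at 0)"
  using assms unfolding smooth_fun_on_def by blast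

lemma smooth_pd_cont:
  assumes "smooth_fun_on S f"
  shows "continuous_on S (ipd as f)"
  using assms unfolding smooth_fun_on_def by blast

lemma pd_local:
  assumes "r > 0" "\<And>y. y \<in> ball \<xi> r \<Longrightarrow> f y = g y"
  shows "pd a f \<xi> = pd a g \<xi>"
  unfolding pd_def
proof (rule deriv_cong_ev[OF _ refl])
  have "\<forall>t. dist t 0 < r / (norm (axis a (1::real) :: real^'a) + 1) \<longrightarrow> f (\<xi> + t *\<^sub>R axis a 1) = g (\<xi> + t *\<^sub>R axis a 1)"
  proof (intro allI impI)
    fix t :: real assume "dist t 0 < r / (norm (axis a (1::real) :: real^'a) + 1)"
    then have "\<bar>t\<bar> < r" by (simp add: norm_axis_1)
    then have "\<xi> + t *\<^sub>R axis a 1 \<in> ball \<xi> r" by (simp add: dist_norm norm_axis_1)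
    then show "f (\<xi> + t *\<^sub>R axis a 1) = g (\<xi> + t *\<^sub>R axis a 1)" by (rule assms(2))
  qed
  then show "\<forall>\<^sub>F t in nhds 0. f (\<xi> + t *\<^sub>R axis a 1) = g (\<xi> + t *\<^sub>R axis a 1)"
    unfolding eventually_nhds_metric using assms(1)
    by (intro exI[of _ "r / (norm (axis a (1::real) :: real^'a) + 1)"]) (simp add: norm_axis_1)
qed

definition Gx where
  "Gx V \<alpha> x P = (\<Sum>\<mu>\<in>UNIV. \<Sum>\<nu>\<in>UNIV. pd \<alpha> (\<lambda>y. V y \<mu> \<nu>) x * sigma P \<mu> * sigma P \<nu>)"

definition Gp where
  "Gp V a \<alpha> x P = (\<Sum>\<mu>\<in>UNIV. \<Sum>\<nu>\<in>UNIV. V x \<mu> \<nu> * (sigma (P(a := dl \<alpha>)) \<mu> * sigma P \<nu> + sigma P \<mu> * sigma (P(a := dl \<alpha>)) \<nu>))"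

lemma gammaL_DERIV_X:
  assumes "volume_metric M V" "x \<in> M"
  shows "((\<lambda>t. gammaL V (x + t *\<^sub>R axis \<alpha> 1) P) has_real_derivative Gx V \<alpha> x P) (at 0)"
proof -
  have d: "((\<lambda>t. V (x + t *\<^sub>R axis \<alpha> 1) \<mu> \<nu>) has_real_derivative pd \<alpha> (\<lambda>y. V y \<mu> \<nu>) x) (at 0)" for \<mu> \<nu>
    using pd_DERIV[OF smooth_pd_diff[of M "\<lambda>y. V y \<mu> \<nu>" x "[]" \<alpha>]] assms
    unfolding volume_metric_def by simp
  show ?thesis unfolding gammaL_def Gx_def
    by (intro DERIV_sum DERIV_cmult_right d)
qed

lemma dL_dX_schild:
  assumes "volume_metric M V" "x \<in> M"
  shows "dL_dX (schildL V) \<alpha> x P = Gx V \<alpha> x P"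
  unfolding dL_dX_def schildL_def
  by (rule DERIV_imp_deriv, rule gammaL_DERIV_X[OF assms])

lemma gammaL_P_poly:
  "gammaL V x (P(a := (P a)(\<alpha> := P a \<alpha> + t))) =
    (\<Sum>\<mu>\<in>UNIV. \<Sum>\<nu>\<in>UNIV. V x \<mu> \<nu> * (sigma P \<mu> + t * sigma (P(a := dl \<alpha>)) \<mu>) * (sigma P \<nu> + t * sigma (P(a := dl \<alpha>)) \<nu>))"
proof -
  have e: "P(a := (P a)(\<alpha> := P a \<alpha> + t)) = P(a := (\<lambda>\<beta>. P a \<beta> + t * dl \<alpha> \<beta>))"
    by (auto simp: dl_def fun_eq_iff)
  have s: "sigma (P(a := (\<lambda>\<beta>. P a \<beta> + t * dl \<alpha> \<beta>))) \<mu> = sigma P \<mu> + t * sigma (P(a := dl \<alpha>)) \<mu>" for \<mu>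
    using sigma_upd_lin[of P a "P a" t "dl \<alpha>" \<mu>] by simp
  show ?thesis unfolding e gammaL_def s by (simp add: mult.assoc)
qed

lemma gammaL_DERIV_P:
  "((\<lambda>t. gammaL V x (P(a := (P a)(\<alpha> := P a \<alpha> + t)))) has_real_derivative Gp V a \<alpha> x P) (at 0)"
  unfolding gammaL_P_poly Gp_def
  by (rule DERIV_sum, rule DERIV_sum, auto intro!: derivative_eq_intros simp: algebra_simps)

lemma dL_dP_schild: "dL_dP (schildL V) a \<alpha> x P = Gp V a \<alpha> x P"
  unfolding dL_dP_def schildL_def
  by (rule DERIV_imp_deriv, rule gammaL_DERIV_P)

lemma gammaL_0: "gammaL V x (P(a := (P a)(\<alpha> := P a \<alpha> + 0))) = gammaL V x P"
  by simp

lemma dL_dX_NG: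
  assumes "volume_metric M V" "x \<in> M" "gammaL V x P > 0"
  shows "dL_dX (nambuGotoL V) \<alpha> x P = Gx V \<alpha> x P / (2 * sqrt (gammaL V x P))"
  unfolding dL_dX_def nambuGotoL_def
proof (rule DERIV_imp_deriv)
  have "((\<lambda>t. sqrt (gammaL V (x + t *\<^sub>R axis \<alpha> 1) P)) has_real_derivative
      inverse (sqrt (gammaL V (x + 0 *\<^sub>R axis \<alpha> 1) P)) / 2 * Gx V \<alpha> x P) (at 0)"
    by (rule DERIV_chain2[OF DERIV_real_sqrt gammaL_DERIV_X[OF assms(1,2)]]) (use assms(3) in simp)
  then show "((\<lambda>t. sqrt (gammaL V (x + t *\<^sub>R axis \<alpha> 1) P)) has_real_derivative
      Gx V \<alpha> x P / (2 * sqrt (gammaL V x P))) (at 0)"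
    by (simp add: field_simps)
qed

lemma dL_dP_NG:
  assumes "gammaL V x P > 0"
  shows "dL_dP (nambuGotoL V) a \<alpha> x P = Gp V a \<alpha> x P / (2 * sqrt (gammaL V x P))"
  unfolding dL_dP_def nambuGotoL_def
proof (rule DERIV_imp_deriv)
  have "((\<lambda>t. sqrt (gammaL V x (P(a := (P a)(\<alpha> := P a \<alpha> + t))))) has_real_derivative
      inverse (sqrt (gammaL V x (P(a := (P a)(\<alpha> := P a \<alpha> + 0))))) / 2 * Gp V a \<alpha> x P) (at 0)"
    by (rule DERIV_chain2[OF DERIV_real_sqrt gammaL_DERIV_P]) (use assms in simp)
  then show "((\<lambda>t. sqrt (gammaL V x (P(a := (P a)(\<alpha> := P a \<alpha> + t))))) has_real_derivative
      Gp V a \<alpha> x P / (2 * sqrt (gammaL V x P))) (at 0)"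
    by (simp add: field_simps)
qed



lemma X_line:
  assumes "smooth_map_on S X" "\<eta> \<in> S"
  shows "((\<lambda>t. X (\<eta> + t *\<^sub>R axis b 1) $ \<alpha>) has_real_derivative DX X \<eta> b \<alpha>) (at 0)"
  using pd_DERIV[OF smooth_pd_diff[of S "\<lambda>y. X y $ \<alpha>" \<eta> "[]" b]] assms
  unfolding smooth_map_on_def DX_def by simp

lemma DX_fun: "(\<lambda>\<xi>. DX X \<xi> a \<alpha>) = ipd [a] (\<lambda>y. X y $ \<alpha>)"
  by (rule ext) (simp add: DX_def)

lemma DX_line:
  assumes "smooth_map_on S X" "\<eta> \<in> S"
  shows "((\<lambda>t. DX X (\<eta> + t *\<^sub>R axis b 1) a \<alpha>) has_real_derivative pd b (\<lambda>\<xi>. DX X \<xi> a \<alpha>) \<eta>) (at 0)"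
proof -
  have "smooth_fun_on S (\<lambda>y. X y $ \<alpha>)" using assms(1) unfolding smooth_map_on_def by blast
  from pd_DERIV[OF smooth_pd_diff[OF this assms(2), of "[a]" b]]
  show ?thesis unfolding DX_fun by (simp add: DX_def)
qed

lemma DX_diff:
  assumes "smooth_map_on S X" "\<eta> \<in> S"
  shows "(\<lambda>t. DX X (\<eta> + t *\<^sub>R axis b 1) a \<alpha>) differentiable (at 0)"
  using DX_line[OF assms] unfolding differentiable_def has_field_derivative_def by blast

lemma V_frechet:
  assumes VM: "volume_metric M V" and oM: "open M" and x: "x \<in> M"
  shows "((\<lambda>y. V y \<mu> \<nu>) has_derivative (\<lambda>h. \<Sum>\<alpha>\<in>UNIV. h$\<alpha> * pd \<alpha> (\<lambda>y. V y \<mu> \<nu>) x)) (at x)"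
proof -
  have sm: "smooth_fun_on M (\<lambda>y. V y \<mu> \<nu>)" using VM unfolding volume_metric_def by blast
  show ?thesis
  proof (rule CP[OF oM x])
    fix a y assume "y \<in> M"
    from smooth_pd_diff[OF sm this, of "[]" a]
    show "(\<lambda>t. V (y + t *\<^sub>R axis a 1) \<mu> \<nu>) differentiable (at 0)" by simp
  next
    fix a
    from smooth_pd_cont[OF sm, of "[a]"]
    show "continuous_on M (pd a (\<lambda>y. V y \<mu> \<nu>))" by simp
  qed
qed

lemma V_line:
  assumes VM: "volume_metric M V" and oM: "open M" and sX: "smooth_map_on S X"
    and XM: "X ` S \<subseteq> M" and \<eta>: "\<eta> \<in> S"
  shows "((\<lambda>t. V (X (\<eta> + t *\<^sub>R axis b 1)) \<mu> \<nu>) has_real_derivative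
           (\<Sum>\<alpha>\<in>UNIV. pd \<alpha> (\<lambda>y. V y \<mu> \<nu>) (X \<eta>) * DX X \<eta> b \<alpha>)) (at 0)"
proof -
  define c where "c t = X (\<eta> + t *\<^sub>R axis b 1)" for t
  define c' where "c' = (\<chi> \<alpha>. DX X \<eta> b \<alpha>)"
  have dc: "(c has_derivative (\<lambda>t. t *\<^sub>R c')) (at 0)"
    by (rule vec_path) (simp add: c_def c'_def X_line[OF sX \<eta>])
  have c0: "c 0 = X \<eta>" by (simp add: c_def)
  have dV: "((\<lambda>y. V y \<mu> \<nu>) has_derivative (\<lambda>h. \<Sum>\<alpha>\<in>UNIV. h$\<alpha> * pd \<alpha> (\<lambda>y. V y \<mu> \<nu>) (X \<eta>))) (at (c 0))"
    unfolding c0 by (rule V_frechet[OF VM oM]) (use XM \<eta> in auto)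
  have "(((\<lambda>y. V y \<mu> \<nu>) \<circ> c) has_derivative
      ((\<lambda>h. \<Sum>\<alpha>\<in>UNIV. h$\<alpha> * pd \<alpha> (\<lambda>y. V y \<mu> \<nu>) (X \<eta>)) \<circ> (\<lambda>t. t *\<^sub>R c'))) (at 0)"
    by (rule diff_chain_at[OF dc dV])
  moreover have "((\<lambda>h. \<Sum>\<alpha>\<in>UNIV. h$\<alpha> * pd \<alpha> (\<lambda>y. V y \<mu> \<nu>) (X \<eta>)) \<circ> (\<lambda>t. t *\<^sub>R c'))
      = (*) (\<Sum>\<alpha>\<in>UNIV. pd \<alpha> (\<lambda>y. V y \<mu> \<nu>) (X \<eta>) * DX X \<eta> b \<alpha>)"
    by (rule ext) (simp add: c'_def sum_distrib_left algebra_simps)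
  ultimately show ?thesis unfolding has_field_derivative_def by (simp add: c_def o_def)
qed

lemma sigma_line:
  assumes sX: "smooth_map_on S X" and \<eta>: "\<eta> \<in> S"
  shows "((\<lambda>t. sigma (DX X (\<eta> + t *\<^sub>R axis b 1)) \<mu>) has_real_derivative
     (\<Sum>a\<in>UNIV. sigma ((DX X \<eta>)(a := (\<lambda>\<alpha>. pd b (\<lambda>\<xi>. DX X \<xi> a \<alpha>) \<eta>))) \<mu>)) (at 0)"
  using sigma_DERIV[of "\<lambda>t. DX X (\<eta> + t *\<^sub>R axis b 1)" "\<lambda>a \<alpha>. pd b (\<lambda>\<xi>. DX X \<xi> a \<alpha>) \<eta>" 0 \<mu>]
    DX_line[OF sX \<eta>] by simp

lemma sigma_line_upd:
  assumes sX: "smooth_map_on S X" and \<eta>: "\<eta> \<in> S"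
  shows "(\<lambda>t. sigma ((DX X (\<eta> + t *\<^sub>R axis b 1))(a := w)) \<mu>) differentiable (at 0)"
proof -
  have "((\<lambda>t. ((DX X (\<eta> + t *\<^sub>R axis b 1))(a := w)) i \<beta>) has_real_derivative
      (if i = a then 0 else pd b (\<lambda>\<xi>. DX X \<xi> i \<beta>) \<eta>)) (at 0)" for i \<beta>
    by (cases "i = a") (auto intro: DX_line[OF sX \<eta>])
  from sigma_DERIV[of "\<lambda>t. (DX X (\<eta> + t *\<^sub>R axis b 1))(a := w)", OF this]
  show ?thesis unfolding differentiable_def has_field_derivative_def by blast
qed

lemma g_line:
  assumes VM: "volume_metric M V" and oM: "open M" and sX: "smooth_map_on S X"
    and XM: "X ` S \<subseteq> M" and \<eta>: "\<eta> \<in> S"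
  shows "((\<lambda>t. gamma_v V X (\<eta> + t *\<^sub>R axis b 1)) has_real_derivative
    (\<Sum>\<mu>\<in>UNIV. \<Sum>\<nu>\<in>UNIV.
       (\<Sum>\<alpha>\<in>UNIV. pd \<alpha> (\<lambda>y. V y \<mu> \<nu>) (X \<eta>) * DX X \<eta> b \<alpha>) * sigma (DX X \<eta>) \<mu> * sigma (DX X \<eta>) \<nu>
       + V (X \<eta>) \<mu> \<nu> * ((\<Sum>a\<in>UNIV. sigma ((DX X \<eta>)(a := (\<lambda>\<alpha>. pd b (\<lambda>\<xi>. DX X \<xi> a \<alpha>) \<eta>))) \<mu>) * sigma (DX X \<eta>) \<nu>
          + sigma (DX X \<eta>) \<mu> * (\<Sum>a\<in>UNIV. sigma ((DX X \<eta>)(a := (\<lambda>\<alpha>. pd b (\<lambda>\<xi>. DX X \<xi> a \<alpha>) \<eta>))) \<nu>)))) (at 0)"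
  unfolding gamma_v_def gammaL_def
proof (rule DERIV_sum, rule DERIV_sum)
  fix \<mu> \<nu>
  show "((\<lambda>t. V (X (\<eta> + t *\<^sub>R axis b 1)) \<mu> \<nu> * sigma (DX X (\<eta> + t *\<^sub>R axis b 1)) \<mu> * sigma (DX X (\<eta> + t *\<^sub>R axis b 1)) \<nu>)
    has_real_derivative
       (\<Sum>\<alpha>\<in>UNIV. pd \<alpha> (\<lambda>y. V y \<mu> \<nu>) (X \<eta>) * DX X \<eta> b \<alpha>) * sigma (DX X \<eta>) \<mu> * sigma (DX X \<eta>) \<nu>
       + V (X \<eta>) \<mu> \<nu> * ((\<Sum>a\<in>UNIV. sigma ((DX X \<eta>)(a := (\<lambda>\<alpha>. pd b (\<lambda>\<xi>. DX X \<xi> a \<alpha>) \<eta>))) \<mu>) * sigma (DX X \<eta>) \<nu>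
          + sigma (DX X \<eta>) \<mu> * (\<Sum>a\<in>UNIV. sigma ((DX X \<eta>)(a := (\<lambda>\<alpha>. pd b (\<lambda>\<xi>. DX X \<xi> a \<alpha>) \<eta>))) \<nu>))) (at 0)"
    by (rule DERIV_cong[OF DERIV_mult'[OF DERIV_mult'[OF V_line[OF VM oM sX XM \<eta>] sigma_line[OF sX \<eta>]] sigma_line[OF sX \<eta>]]])
       (simp add: algebra_simps)
qed

lemma g_diff:
  assumes VM: "volume_metric M V" and oM: "open M" and sX: "smooth_map_on S X"
    and XM: "X ` S \<subseteq> M" and \<eta>: "\<eta> \<in> S"
  shows "(\<lambda>t. gamma_v V X (\<eta> + t *\<^sub>R axis b 1)) differentiable (at 0)"
  using g_line[OF assms] unfolding differentiable_def has_field_derivative_def by blast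

lemma q_diff:
  assumes VM: "volume_metric M V" and oM: "open M" and sX: "smooth_map_on S X"
    and XM: "X ` S \<subseteq> M" and \<eta>: "\<eta> \<in> S"
  shows "(\<lambda>t. Gp V a \<alpha> (X (\<eta> + t *\<^sub>R axis b 1)) (DX X (\<eta> + t *\<^sub>R axis b 1))) differentiable (at 0)"
proof -
  have V: "(\<lambda>t. V (X (\<eta> + t *\<^sub>R axis b 1)) \<mu> \<nu>) differentiable (at 0)" for \<mu> \<nu>
    using V_line[OF assms] unfolding differentiable_def has_field_derivative_def by blast
  have s: "(\<lambda>t. sigma (DX X (\<eta> + t *\<^sub>R axis b 1)) \<mu>) differentiable (at 0)" for \<mu>
    using sigma_line[OF sX \<eta>] unfolding differentiable_def has_field_derivative_def by blast
  show ?thesis unfolding Gp_def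
    by (intro differentiable_sum finite_UNIV ballI differentiable_mult differentiable_add V s sigma_line_upd[OF sX \<eta>]) auto
qed



lemma swap3: "(\<Sum>\<alpha>\<in>A. \<Sum>\<mu>\<in>B. \<Sum>\<nu>\<in>C. F \<alpha> \<mu> \<nu>) = (\<Sum>\<mu>\<in>B. \<Sum>\<nu>\<in>C. \<Sum>\<alpha>\<in>A. F \<alpha> \<mu> \<nu>)"
  by (rule trans[OF sum.swap], rule sum.cong[OF refl], rule sum.swap)

lemma swap4: "(\<Sum>a\<in>A. \<Sum>\<alpha>\<in>A'. \<Sum>\<mu>\<in>B. \<Sum>\<nu>\<in>C. F a \<alpha> \<mu> \<nu>) = (\<Sum>\<mu>\<in>B. \<Sum>\<nu>\<in>C. \<Sum>a\<in>A. \<Sum>\<alpha>\<in>A'. F a \<alpha> \<mu> \<nu>)"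
  by (subst swap3, subst swap3, rule refl)

lemma eq1_alg:
  fixes P R :: "'d::finite \<Rightarrow> 'D::finite \<Rightarrow> real"
  shows "(\<Sum>\<mu>\<in>UNIV. \<Sum>\<nu>\<in>UNIV. (\<Sum>\<alpha>\<in>UNIV. pd \<alpha> (\<lambda>y. V y \<mu> \<nu>) x * P b \<alpha>) * sigma P \<mu> * sigma P \<nu>
       + V x \<mu> \<nu> * ((\<Sum>a\<in>UNIV. sigma (P(a := R a)) \<mu>) * sigma P \<nu> + sigma P \<mu> * (\<Sum>a\<in>UNIV. sigma (P(a := R a)) \<nu>)))
    = (\<Sum>\<alpha>\<in>UNIV. Gx V \<alpha> x P * P b \<alpha>) + (\<Sum>a\<in>UNIV. \<Sum>\<alpha>\<in>UNIV. Gp V a \<alpha> x P * R a \<alpha>)"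
proof -
  have A: "(\<Sum>\<alpha>\<in>UNIV. Gx V \<alpha> x P * P b \<alpha>) = (\<Sum>\<mu>\<in>UNIV. \<Sum>\<nu>\<in>UNIV. \<Sum>\<alpha>\<in>UNIV. pd \<alpha> (\<lambda>y. V y \<mu> \<nu>) x * sigma P \<mu> * sigma P \<nu> * P b \<alpha>)"
    unfolding Gx_def sum_distrib_right by (rule swap3)
  have B: "(\<Sum>a\<in>UNIV. \<Sum>\<alpha>\<in>UNIV. Gp V a \<alpha> x P * R a \<alpha>) = (\<Sum>\<mu>\<in>UNIV. \<Sum>\<nu>\<in>UNIV. \<Sum>a\<in>UNIV. \<Sum>\<alpha>\<in>UNIV.
      V x \<mu> \<nu> * (sigma (P(a := dl \<alpha>)) \<mu> * sigma P \<nu> + sigma P \<mu> * sigma (P(a := dl \<alpha>)) \<nu>) * R a \<alpha>)"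
    unfolding Gp_def sum_distrib_right by (rule swap4)
  show ?thesis unfolding A B sum.distrib[symmetric]
  proof (intro sum.cong refl)
    fix \<mu> \<nu>
    show "(\<Sum>\<alpha>\<in>UNIV. pd \<alpha> (\<lambda>y. V y \<mu> \<nu>) x * P b \<alpha>) * sigma P \<mu> * sigma P \<nu>
       + V x \<mu> \<nu> * ((\<Sum>a\<in>UNIV. sigma (P(a := R a)) \<mu>) * sigma P \<nu> + sigma P \<mu> * (\<Sum>a\<in>UNIV. sigma (P(a := R a)) \<nu>))
      = (\<Sum>\<alpha>\<in>UNIV. pd \<alpha> (\<lambda>y. V y \<mu> \<nu>) x * sigma P \<mu> * sigma P \<nu> * P b \<alpha>)
       + (\<Sum>a\<in>UNIV. \<Sum>\<alpha>\<in>UNIV. V x \<mu> \<nu> * (sigma (P(a := dl \<alpha>)) \<mu> * sigma P \<nu> + sigma P \<mu> * sigma (P(a := dl \<alpha>)) \<nu>) * R a \<alpha>)"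
      by (simp add: sigma_upd_sum[of P _ "R _"] sum_distrib_left sum_distrib_right sum.distrib algebra_simps)
  qed
qed

lemma contract:
  fixes P :: "'d::finite \<Rightarrow> 'D::finite \<Rightarrow> real"
  shows "(\<Sum>\<alpha>\<in>UNIV. Gp V a \<alpha> x P * P b \<alpha>) = (if a = b then 2 * gammaL V x P else 0)"
proof -
  have "(\<Sum>\<alpha>\<in>UNIV. Gp V a \<alpha> x P * P b \<alpha>) = (\<Sum>\<mu>\<in>UNIV. \<Sum>\<nu>\<in>UNIV. \<Sum>\<alpha>\<in>UNIV.
      V x \<mu> \<nu> * (sigma (P(a := dl \<alpha>)) \<mu> * sigma P \<nu> + sigma P \<mu> * sigma (P(a := dl \<alpha>)) \<nu>) * P b \<alpha>)"
    unfolding Gp_def sum_distrib_right by (rule swap3)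
  also have "\<dots> = (\<Sum>\<mu>\<in>UNIV. \<Sum>\<nu>\<in>UNIV. V x \<mu> \<nu> * (sigma (P(a := P b)) \<mu> * sigma P \<nu> + sigma P \<mu> * sigma (P(a := P b)) \<nu>))"
    by (intro sum.cong refl)
       (simp add: sigma_upd_sum[of P a "P b"] sum_distrib_left sum_distrib_right sum.distrib algebra_simps)
  also have "\<dots> = (if a = b then 2 * gammaL V x P else 0)"
  proof (cases "a = b")
    case True
    then show ?thesis by (simp add: gammaL_def sum_distrib_left algebra_simps)
  next
    case False
    then show ?thesis by (simp add: sigma_alt)
  qed
  finally show ?thesis .
qed



lemma schild_expr:
  assumes "volume_metric M V" "X ` S \<subseteq> M" "\<xi> \<in> S"
  shows "dL_dX (schildL V) \<alpha> (X \<xi>) (DX X \<xi>) - (\<Sum>a\<in>UNIV. pd a (\<lambda>\<eta>. dL_dP (schildL V) a \<alpha> (X \<eta>) (DX X \<eta>)) \<xi>)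
    = Gx V \<alpha> (X \<xi>) (DX X \<xi>) - (\<Sum>a\<in>UNIV. pd a (\<lambda>\<eta>. Gp V a \<alpha> (X \<eta>) (DX X \<eta>)) \<xi>)"
proof -
  have "X \<xi> \<in> M" using assms by auto
  then show ?thesis by (simp add: dL_dX_schild[OF assms(1)] dL_dP_schild)
qed

lemma NG_rel:
  assumes VM: "volume_metric M V" and oM: "open M" and sX: "smooth_map_on S X"
    and XM: "X ` S \<subseteq> M" and S: "open S" and \<xi>: "\<xi> \<in> S"
    and pos: "\<forall>\<xi>\<in>S. gamma_v V X \<xi> > 0" and c: "\<forall>\<eta>\<in>S. gamma_v V X \<eta> = c"
  shows "dL_dX (nambuGotoL V) \<alpha> (X \<xi>) (DX X \<xi>) - (\<Sum>a\<in>UNIV. pd a (\<lambda>\<eta>. dL_dP (nambuGotoL V) a \<alpha> (X \<eta>) (DX X \<eta>)) \<xi>)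
    = (Gx V \<alpha> (X \<xi>) (DX X \<xi>) - (\<Sum>a\<in>UNIV. pd a (\<lambda>\<eta>. Gp V a \<alpha> (X \<eta>) (DX X \<eta>)) \<xi>)) / (2 * sqrt c)"
proof -
  have cpos: "c > 0" using pos c \<xi> by auto
  obtain r where r: "r > 0" "ball \<xi> r \<subseteq> S" using S \<xi> open_contains_ball by blast
  have 1: "dL_dX (nambuGotoL V) \<alpha> (X \<xi>) (DX X \<xi>) = Gx V \<alpha> (X \<xi>) (DX X \<xi>) / (2 * sqrt c)"
    using dL_dX_NG[OF VM, of "X \<xi>" "DX X \<xi>" \<alpha>] XM \<xi> pos c by (auto simp: gamma_v_def)
  have 2: "pd a (\<lambda>\<eta>. dL_dP (nambuGotoL V) a \<alpha> (X \<eta>) (DX X \<eta>)) \<xi>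
      = pd a (\<lambda>\<eta>. Gp V a \<alpha> (X \<eta>) (DX X \<eta>)) \<xi> / (2 * sqrt c)" for a
  proof -
    have "pd a (\<lambda>\<eta>. dL_dP (nambuGotoL V) a \<alpha> (X \<eta>) (DX X \<eta>)) \<xi>
        = pd a (\<lambda>\<eta>. Gp V a \<alpha> (X \<eta>) (DX X \<eta>) / (2 * sqrt c)) \<xi>"
    proof (rule pd_local[OF r(1)])
      fix y assume "y \<in> ball \<xi> r"
      then have "y \<in> S" using r by auto
      then show "dL_dP (nambuGotoL V) a \<alpha> (X y) (DX X y) = Gp V a \<alpha> (X y) (DX X y) / (2 * sqrt c)"
        using dL_dP_NG[of V "X y" "DX X y" a \<alpha>] pos c by (auto simp: gamma_v_def)
    qed
    also have "\<dots> = pd a (\<lambda>\<eta>. Gp V a \<alpha> (X \<eta>) (DX X \<eta>)) \<xi> / (2 * sqrt c)"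
      by (rule pd_eqI, rule DERIV_cdivide, rule pd_DERIV, rule q_diff[OF VM oM sX XM \<xi>])
    finally show ?thesis .
  qed
  show ?thesis unfolding 1 2 by (simp add: sum_divide_distrib diff_divide_distrib)
qed

lemma pd_zero:
  assumes VM: "volume_metric M V" and oM: "open M" and sX: "smooth_map_on S X"
    and XM: "X ` S \<subseteq> M" and S: "open S" and \<xi>: "\<xi> \<in> S"
    and EL: "\<And>\<alpha> \<xi>. \<xi> \<in> S \<Longrightarrow> Gx V \<alpha> (X \<xi>) (DX X \<xi>) = (\<Sum>a\<in>UNIV. pd a (\<lambda>\<eta>. Gp V a \<alpha> (X \<eta>) (DX X \<eta>)) \<xi>)"
  shows "pd b (gamma_v V X) \<xi> = 0"
proof -
  define g where "g = gamma_v V X"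
  define q where "q a \<alpha> = (\<lambda>\<eta>. Gp V a \<alpha> (X \<eta>) (DX X \<eta>))" for a \<alpha>
  define P where "P = DX X \<xi>"
  define R where "R a \<alpha> = pd b (\<lambda>\<eta>. DX X \<eta> a \<alpha>) \<xi>" for a \<alpha>
  have sm: "smooth_fun_on S (\<lambda>y. X y $ \<alpha>)" for \<alpha> using sX unfolding smooth_map_on_def by blast
  have SWa: "R a \<alpha> = pd a (\<lambda>\<eta>. DX X \<eta> b \<alpha>) \<xi>" for a \<alpha>
  proof -
    have "pd b (pd a (\<lambda>y. X y $ \<alpha>)) \<xi> = pd a (pd b (\<lambda>y. X y $ \<alpha>)) \<xi>"
    proof (rule SW[OF S \<xi>])
      fix y assume y: "y \<in> S"
      show "(\<lambda>t. X (y + t *\<^sub>R axis a 1) $ \<alpha>) differentiable (at 0)"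
        using smooth_pd_diff[OF sm y, of "[]"] by simp
      show "(\<lambda>t. X (y + t *\<^sub>R axis b 1) $ \<alpha>) differentiable (at 0)"
        using smooth_pd_diff[OF sm y, of "[]"] by simp
      show "(\<lambda>t. pd a (\<lambda>y. X y $ \<alpha>) (y + t *\<^sub>R axis b 1)) differentiable (at 0)"
        using smooth_pd_diff[OF sm y, of "[a]"] by simp
      show "(\<lambda>t. pd b (\<lambda>y. X y $ \<alpha>) (y + t *\<^sub>R axis a 1)) differentiable (at 0)"
        using smooth_pd_diff[OF sm y, of "[b]"] by simp
    next
      show "continuous_on S (pd b (pd a (\<lambda>y. X y $ \<alpha>)))"
        using smooth_pd_cont[OF sm, of "[b, a]"] by simp
      show "continuous_on S (pd a (pd b (\<lambda>y. X y $ \<alpha>)))"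
        using smooth_pd_cont[OF sm, of "[a, b]"] by simp
    qed
    then show ?thesis unfolding R_def DX_fun by simp
  qed
  have h1: "pd b g \<xi> = (\<Sum>\<alpha>\<in>UNIV. Gx V \<alpha> (X \<xi>) P * P b \<alpha>) + (\<Sum>a\<in>UNIV. \<Sum>\<alpha>\<in>UNIV. q a \<alpha> \<xi> * R a \<alpha>)"
    unfolding g_def q_def
    by (rule trans[OF pd_eqI[OF g_line[OF VM oM sX XM \<xi>]]])
       (simp add: eq1_alg[of V "X \<xi>" "DX X \<xi>" b R, unfolded R_def] P_def R_def)
  have Eq2: "pd a (\<lambda>\<eta>. \<Sum>\<alpha>\<in>UNIV. q a \<alpha> \<eta> * DX X \<eta> b \<alpha>) \<xi>
      = (\<Sum>\<alpha>\<in>UNIV. pd a (q a \<alpha>) \<xi> * P b \<alpha> + q a \<alpha> \<xi> * R a \<alpha>)" for a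
  proof (rule pd_eqI, rule DERIV_sum)
    fix \<alpha>
    have dq: "((\<lambda>t. q a \<alpha> (\<xi> + t *\<^sub>R axis a 1)) has_real_derivative pd a (q a \<alpha>) \<xi>) (at 0)"
      unfolding q_def by (rule pd_DERIV, rule q_diff[OF VM oM sX XM \<xi>])
    show "((\<lambda>t. q a \<alpha> (\<xi> + t *\<^sub>R axis a 1) * DX X (\<xi> + t *\<^sub>R axis a 1) b \<alpha>) has_real_derivative
        pd a (q a \<alpha>) \<xi> * P b \<alpha> + q a \<alpha> \<xi> * R a \<alpha>) (at 0)"
      by (rule DERIV_cong[OF DERIV_mult'[OF dq DX_line[OF sX \<xi>]]]) (simp add: SWa P_def)
  qed
  have Eq3: "(\<lambda>\<eta>. \<Sum>\<alpha>\<in>UNIV. q a \<alpha> \<eta> * DX X \<eta> b \<alpha>) = (\<lambda>\<eta>. if a = b then 2 * g \<eta> else 0)" for a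
    by (rule ext) (simp add: q_def contract g_def gamma_v_def)
  have dg: "((\<lambda>t. g (\<xi> + t *\<^sub>R axis b 1)) has_real_derivative pd b g \<xi>) (at 0)"
    unfolding g_def by (rule pd_DERIV, rule g_diff[OF VM oM sX XM \<xi>])
  have Eq4: "pd a (\<lambda>\<eta>. if a = b then 2 * g \<eta> else 0) \<xi> = (if a = b then 2 * pd b g \<xi> else 0)" for a
  proof (cases "a = b")
    case True
    then show ?thesis by simp (rule pd_eqI, rule DERIV_cmult, rule dg)
  next
    case False
    then show ?thesis by simp (rule pd_eqI, rule DERIV_const)
  qed
  have "pd b g \<xi> = (\<Sum>\<alpha>\<in>UNIV. (\<Sum>a\<in>UNIV. pd a (q a \<alpha>) \<xi>) * P b \<alpha>) + (\<Sum>a\<in>UNIV. \<Sum>\<alpha>\<in>UNIV. q a \<alpha> \<xi> * R a \<alpha>)"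
    using h1 EL[OF \<xi>] by (simp add: q_def P_def)
  also have "\<dots> = (\<Sum>a\<in>UNIV. \<Sum>\<alpha>\<in>UNIV. pd a (q a \<alpha>) \<xi> * P b \<alpha> + q a \<alpha> \<xi> * R a \<alpha>)"
  proof -
    have "(\<Sum>\<alpha>\<in>UNIV. (\<Sum>a\<in>UNIV. pd a (q a \<alpha>) \<xi>) * P b \<alpha>) = (\<Sum>a\<in>UNIV. \<Sum>\<alpha>\<in>UNIV. pd a (q a \<alpha>) \<xi> * P b \<alpha>)"
      unfolding sum_distrib_right by (rule sum.swap)
    then show ?thesis by (simp add: sum.distrib)
  qed
  also have "\<dots> = (\<Sum>a\<in>UNIV. pd a (\<lambda>\<eta>. \<Sum>\<alpha>\<in>UNIV. q a \<alpha> \<eta> * DX X \<eta> b \<alpha>) \<xi>)"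
    by (simp add: Eq2)
  also have "\<dots> = (\<Sum>a\<in>UNIV. if a = b then 2 * pd b g \<xi> else 0)"
    by (simp add: Eq3 Eq4)
  also have "\<dots> = 2 * pd b g \<xi>" by simp
  finally show ?thesis unfolding g_def by simp
qed



theorem mainTheorem5:
  fixes S :: "(real^'d::finite) set" and M :: "(real^'D::finite) set"
    and V :: "real^'D \<Rightarrow> ('d \<Rightarrow> 'D) \<Rightarrow> ('d \<Rightarrow> 'D) \<Rightarrow> real"
    and X :: "real^'d \<Rightarrow> real^'D"
  assumes "open S" and "connected S" and "open M"
    and "volume_metric M V"
    and "smooth_map_on S X" and "X ` S \<subseteq> M"
    and "\<forall>\<xi>\<in>S. gamma_v V X \<xi> > 0"
  shows "euler_lagrange S (schildL V) X \<longleftrightarrow>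
           (\<exists>c. \<forall>\<xi>\<in>S. gamma_v V X \<xi> = c) \<and> euler_lagrange S (nambuGotoL V) X"
proof -
  note S = assms(1) and conn = assms(2) and oM = assms(3) and VM = assms(4) and sX = assms(5)
    and XM = assms(6) and pos = assms(7)
  have sch: "euler_lagrange S (schildL V) X \<longleftrightarrow>
     (\<forall>\<alpha>. \<forall>\<xi>\<in>S. Gx V \<alpha> (X \<xi>) (DX X \<xi>) - (\<Sum>a\<in>UNIV. pd a (\<lambda>\<eta>. Gp V a \<alpha> (X \<eta>) (DX X \<eta>)) \<xi>) = 0)"
    unfolding euler_lagrange_def using schild_expr[OF VM XM] by simp
  show ?thesis
  proof
    assume L: "euler_lagrange S (schildL V) X"
    have EL: "Gx V \<alpha> (X \<xi>) (DX X \<xi>) = (\<Sum>a\<in>UNIV. pd a (\<lambda>\<eta>. Gp V a \<alpha> (X \<eta>) (DX X \<eta>)) \<xi>)"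
      if "\<xi> \<in> S" for \<alpha> \<xi>
      using L that unfolding sch by auto
    have pd0: "pd b (gamma_v V X) \<xi> = 0" if "\<xi> \<in> S" for b \<xi>
      by (rule pd_zero[OF VM oM sX XM S that EL])
    have der: "(gamma_v V X has_derivative (\<lambda>h. 0)) (at \<xi>)" if \<xi>: "\<xi> \<in> S" for \<xi>
    proof -
      have "(gamma_v V X has_derivative (\<lambda>h. \<Sum>a\<in>UNIV. h$a * pd a (gamma_v V X) \<xi>)) (at \<xi>)"
      proof (rule CP[OF S \<xi>])
        fix a y assume "y \<in> S"
        then show "(\<lambda>t. gamma_v V X (y + t *\<^sub>R axis a 1)) differentiable (at 0)"
          by (rule g_diff[OF VM oM sX XM])
      next
        fix a
        show "continuous_on S (pd a (gamma_v V X))"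
          by (rule continuous_on_eq[of S "\<lambda>_. 0"]) (auto simp: pd0)
      qed
      then show ?thesis using pd0[OF \<xi>] by simp
    qed
    have cont: "continuous_on S (gamma_v V X)"
      by (rule continuous_at_imp_continuous_on) (use der has_derivative_continuous in blast)
    have "gamma_v V X constant_on S"
      by (rule has_derivative_zero_connected_constant_on[OF conn S finite.emptyI cont])
         (auto intro: has_derivative_at_withinI der)
    then obtain c where c: "\<forall>\<xi>\<in>S. gamma_v V X \<xi> = c" unfolding constant_on_def by blast
    have "euler_lagrange S (nambuGotoL V) X"
      unfolding euler_lagrange_def
    proof (intro allI ballI)
      fix \<alpha> \<xi> assume \<xi>: "\<xi> \<in> S"
      show "dL_dX (nambuGotoL V) \<alpha> (X \<xi>) (DX X \<xi>) - (\<Sum>a\<in>UNIV. pd a (\<lambda>\<eta>. dL_dP (nambuGotoL V) a \<alpha> (X \<eta>) (DX X \<eta>)) \<xi>) = 0"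
        unfolding NG_rel[OF VM oM sX XM S \<xi> pos c] using EL[OF \<xi>] by simp
    qed
    with c show "(\<exists>c. \<forall>\<xi>\<in>S. gamma_v V X \<xi> = c) \<and> euler_lagrange S (nambuGotoL V) X" by blast
  next
    assume R: "(\<exists>c. \<forall>\<xi>\<in>S. gamma_v V X \<xi> = c) \<and> euler_lagrange S (nambuGotoL V) X"
    then obtain c where c: "\<forall>\<xi>\<in>S. gamma_v V X \<xi> = c" and NG: "euler_lagrange S (nambuGotoL V) X" by blast
    show "euler_lagrange S (schildL V) X"
      unfolding sch
    proof (intro allI ballI)
      fix \<alpha> \<xi> assume \<xi>: "\<xi> \<in> S"
      have cpos: "c > 0" using pos c \<xi> by auto
      have "(Gx V \<alpha> (X \<xi>) (DX X \<xi>) - (\<Sum>a\<in>UNIV. pd a (\<lambda>\<eta>. Gp V a \<alpha> (X \<eta>) (DX X \<eta>)) \<xi>)) / (2 * sqrt c) = 0"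
        using NG \<xi> unfolding euler_lagrange_def NG_rel[OF VM oM sX XM S \<xi> pos c, symmetric] by blast
      then show "Gx V \<alpha> (X \<xi>) (DX X \<xi>) - (\<Sum>a\<in>UNIV. pd a (\<lambda>\<eta>. Gp V a \<alpha> (X \<eta>) (DX X \<eta>)) \<xi>) = 0"
        using cpos by simp
    qed
  qed
qed

end
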